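(* Let $p$ be a prime and $G$ a $p$-group of order $p^m$ with $|G/Z(G)|=p^2$. Then $$A_G(t)=\frac{1}{p^m}\left(\frac{p^{m-2}}{1-p^mt}+\frac{p^m-p^{m-2}}{1-p^{m-1}t}\right).$$
   Context: For a finite group $G$ and $n\ge0$, let $\alpha_{G,n}$ be the number of orbits of $G$ acting on $G^n$ by simultaneous conjugation $g\cdot(x_1,\dots,x_n)=(gx_1g^{-1},\dots,gx_ng^{-1})$, and $A_G(t)=\sum_{n\ge0}\alpha_{G,n}t^n$, viewed as a rational function of $t$. *)

theory Defs
  imports "HOL-Algebra.Algebra" "HOL-Library.FuncSet"
    "HOL-Computational_Algebra.Formal_Power_Series"
begin

definition group_center :: "('a, 'b) monoid_scheme \<Rightarrow> 'a set" where
  "group_center G = {z \<in> carrier G. \<forall>g \<in> carrier G. z \<otimes>\<^bsub>G\<^esub> g = g \<otimes>\<^bsub>G\<^esub> z}"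

definition tuple_conj :: "('a, 'b) monoid_scheme \<Rightarrow> nat \<Rightarrow> 'a \<Rightarrow> (nat \<Rightarrow> 'a) \<Rightarrow> (nat \<Rightarrow> 'a)" where
  "tuple_conj G n g x = restrict (\<lambda>i. g \<otimes>\<^bsub>G\<^esub> x i \<otimes>\<^bsub>G\<^esub> inv\<^bsub>G\<^esub> g) {..<n}"

definition conj_orbit_count :: "('a, 'b) monoid_scheme \<Rightarrow> nat \<Rightarrow> nat" where
  "conj_orbit_count G n =
     card ((\<lambda>x. (\<lambda>g. tuple_conj G n g x) ` carrier G) ` ({..<n} \<rightarrow>\<^sub>E carrier G))"

definition conj_orbit_series :: "('a, 'b) monoid_scheme \<Rightarrow> real fps" where
  "conj_orbit_series G = Abs_fps (\<lambda>n. of_nat (conj_orbit_count G n))"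

end

theory Submission
  imports Defs "HOL-Computational_Algebra.Primes"
begin

lemma fps_geom: "inverse (1 - fps_const (c::real) * fps_X) = Abs_fps (\<lambda>n. c^n)"
proof (rule fps_inverse_unique)
  let ?A = "Abs_fps (\<lambda>n. c^n) :: real fps"
  have e: "(1 - fps_const c * fps_X) * ?A = ?A - fps_const c * (fps_X * ?A)"
    by (simp add: left_diff_distrib mult.assoc)
  show "(1 - fps_const c * fps_X) * ?A = 1"
    unfolding e
  proof (rule fps_ext)
    fix n
    show "fps_nth (?A - fps_const c * (fps_X * ?A)) n = fps_nth (1::real fps) n"
      by (cases n) simp_all
  qed
qed

lemma (in group) conj_fix_iff:
  assumes "g \<in> carrier G" "x \<in> carrier G"
  shows "(g \<otimes> x \<otimes> inv g = x) = (x \<otimes> g = g \<otimes> x)"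
  using assms by (metis inv_solve_right m_closed inv_closed)

lemma (in group) tc_comp:
  assumes "g \<in> carrier G" "h \<in> carrier G" "x \<in> {..<n} \<rightarrow>\<^sub>E carrier G"
  shows "tuple_conj G n g (tuple_conj G n h x) = tuple_conj G n (g \<otimes> h) x"
  using assms by (auto simp: tuple_conj_def inv_mult_group m_assoc PiE_iff)

lemma (in group) tc_one:
  assumes "x \<in> {..<n} \<rightarrow>\<^sub>E carrier G"
  shows "tuple_conj G n \<one> x = x"
  using assms by (auto simp: tuple_conj_def PiE_iff extensional_def)

lemma (in group) tc_closed:
  assumes "g \<in> carrier G" "x \<in> {..<n} \<rightarrow>\<^sub>E carrier G"
  shows "tuple_conj G n g x \<in> {..<n} \<rightarrow>\<^sub>E carrier G"
  using assms by (auto simp: tuple_conj_def PiE_iff)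

lemma (in group) tc_action:
  "group_action G ({..<n} \<rightarrow>\<^sub>E carrier G) (\<lambda>g. restrict (tuple_conj G n g) ({..<n} \<rightarrow>\<^sub>E carrier G))"
proof -
  let ?X = "{..<n} \<rightarrow>\<^sub>E carrier G"
  let ?f = "\<lambda>g. restrict (tuple_conj G n g) ?X"
  have bij: "?f g \<in> Bij ?X" if g: "g \<in> carrier G" for g
  proof -
    have "bij_betw (?f g) ?X ?X"
    proof (rule bij_betw_byWitness[where f' = "?f (inv g)"])
      show "\<forall>a\<in>?X. ?f (inv g) (?f g a) = a"
        using g by (simp add: tc_closed tc_comp tc_one)
      show "\<forall>a\<in>?X. ?f g (?f (inv g) a) = a"
        using g by (simp add: tc_closed tc_comp tc_one)
      show "?f g ` ?X \<subseteq> ?X" using g tc_closed[of g] by (simp add: image_subset_iff)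
      show "?f (inv g) ` ?X \<subseteq> ?X" using g tc_closed[of "inv g"] by (simp add: image_subset_iff)
    qed
    then show ?thesis by (simp add: Bij_def)
  qed
  have hom: "?f \<in> hom G (BijGroup ?X)"
  proof -
    have "?f (g \<otimes> h) = compose ?X (?f g) (?f h)" if "g \<in> carrier G" "h \<in> carrier G" for g h
      by (rule ext) (simp add: compose_def tc_closed tc_comp that)
    then show ?thesis
      unfolding hom_def BijGroup_def using bij by simp
  qed
  show ?thesis
    unfolding group_action_def group_hom_def group_hom_axioms_def
    using hom by (simp add: group_BijGroup is_group)
qed

lemma (in group) count_burnside:
  assumes fin: "finite (carrier G)"
  shows "conj_orbit_count G n * order G =
    (\<Sum>g\<in>carrier G. card {x \<in> carrier G. x \<otimes> g = g \<otimes> x} ^ n)"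
proof -
  let ?X = "{..<n} \<rightarrow>\<^sub>E carrier G"
  let ?f = "\<lambda>g. restrict (tuple_conj G n g) ?X"
  interpret A: group_action G ?X ?f by (rule tc_action)
  have finX: "finite ?X" using fin by (simp add: finite_PiE)
  have orb: "orbits G ?X ?f = (\<lambda>x. (\<lambda>g. tuple_conj G n g x) ` carrier G) ` ?X"
    unfolding orbits_def orbit_def by auto
  have inv: "invariants ?X ?f g = {..<n} \<rightarrow>\<^sub>E {x \<in> carrier G. x \<otimes> g = g \<otimes> x}"
    if g: "g \<in> carrier G" for g
  proof -
    have "tuple_conj G n g x = x \<longleftrightarrow> (\<forall>i<n. x i \<otimes> g = g \<otimes> x i)" if x: "x \<in> ?X" for x
    proof -
      have "tuple_conj G n g x = x \<longleftrightarrow> (\<forall>i<n. g \<otimes> x i \<otimes> inv g = x i)"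
        using x unfolding tuple_conj_def
        by (auto simp: PiE_iff extensional_def restrict_def fun_eq_iff)
      also have "\<dots> \<longleftrightarrow> (\<forall>i<n. x i \<otimes> g = g \<otimes> x i)"
        using x g conj_fix_iff by (auto simp: PiE_iff)
      finally show ?thesis .
    qed
    then show ?thesis unfolding invariants_def by (auto simp: PiE_iff extensional_def)
  qed
  have "card (orbits G ?X ?f) * order G = (\<Sum>g\<in>carrier G. card (invariants ?X ?f g))"
    by (rule A.burnside[OF fin finX])
  also have "\<dots> = (\<Sum>g\<in>carrier G. card {x \<in> carrier G. x \<otimes> g = g \<otimes> x} ^ n)"
    by (rule sum.cong) (simp_all add: inv card_PiE)
  finally show ?thesis unfolding conj_orbit_count_def orb .
qed

lemma (in group) comm_inv:
  assumes "a \<in> carrier G" "g \<in> carrier G" "a \<otimes> g = g \<otimes> a"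
  shows "inv a \<otimes> g = g \<otimes> inv a"
proof -
  have "inv a \<otimes> g = inv a \<otimes> g \<otimes> (a \<otimes> inv a)" using assms by simp
  also have "\<dots> = inv a \<otimes> (g \<otimes> a) \<otimes> inv a" using assms by (simp add: m_assoc)
  also have "\<dots> = inv a \<otimes> (a \<otimes> g) \<otimes> inv a" by (simp only: assms(3))
  also have "\<dots> = g \<otimes> inv a" using assms(1,2) by (simp add: m_assoc[symmetric])
  finally show ?thesis .
qed

lemma (in group) centralizer_subgroup:
  assumes g: "g \<in> carrier G"
  shows "subgroup {x \<in> carrier G. x \<otimes> g = g \<otimes> x} G"
proof (rule subgroupI)
  show "{x \<in> carrier G. x \<otimes> g = g \<otimes> x} \<noteq> {}" using g by (auto intro!: exI[of _ \<one>])
  show "inv a \<in> {x \<in> carrier G. x \<otimes> g = g \<otimes> x}" if "a \<in> {x \<in> carrier G. x \<otimes> g = g \<otimes> x}" for a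
    using that g comm_inv by auto
  show "a \<otimes> b \<in> {x \<in> carrier G. x \<otimes> g = g \<otimes> x}"
    if "a \<in> {x \<in> carrier G. x \<otimes> g = g \<otimes> x}" "b \<in> {x \<in> carrier G. x \<otimes> g = g \<otimes> x}" for a b
  proof -
    have "a \<otimes> b \<otimes> g = a \<otimes> (g \<otimes> b)" using that g by (simp add: m_assoc)
    also have "\<dots> = g \<otimes> (a \<otimes> b)" using that g by (simp add: m_assoc[symmetric])
    finally show ?thesis using that by simp
  qed
qed auto

lemma (in group) center_subgroup: "subgroup (group_center G) G"
proof (rule subgroupI)
  show "group_center G \<subseteq> carrier G" by (auto simp: group_center_def)
  have "\<one> \<in> group_center G" by (simp add: group_center_def)
  then show "group_center G \<noteq> {}" by blast
  show "inv a \<in> group_center G" if "a \<in> group_center G" for a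
  proof -
    have a: "a \<in> carrier G" "\<And>g. g \<in> carrier G \<Longrightarrow> a \<otimes> g = g \<otimes> a"
      using that by (auto simp: group_center_def)
    have "inv a \<otimes> g = g \<otimes> inv a" if g: "g \<in> carrier G" for g
      using comm_inv[OF a(1) g a(2)[OF g]] .
    then show ?thesis using a(1) by (simp add: group_center_def)
  qed
  show "a \<otimes> b \<in> group_center G" if "a \<in> group_center G" "b \<in> group_center G" for a b
  proof -
    have a: "a \<in> carrier G" "\<And>g. g \<in> carrier G \<Longrightarrow> a \<otimes> g = g \<otimes> a"
      and b: "b \<in> carrier G" "\<And>g. g \<in> carrier G \<Longrightarrow> b \<otimes> g = g \<otimes> b"
      using that by (auto simp: group_center_def)
    have "a \<otimes> b \<otimes> g = g \<otimes> (a \<otimes> b)" if g: "g \<in> carrier G" for g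
    proof -
      have "a \<otimes> b \<otimes> g = a \<otimes> (b \<otimes> g)" using a(1) b(1) g by (simp add: m_assoc)
      also have "\<dots> = a \<otimes> (g \<otimes> b)" using b(2)[OF g] by simp
      also have "\<dots> = (a \<otimes> g) \<otimes> b" using a(1) b(1) g by (simp add: m_assoc)
      also have "\<dots> = (g \<otimes> a) \<otimes> b" using a(2)[OF g] by simp
      also have "\<dots> = g \<otimes> (a \<otimes> b)" using a(1) b(1) g by (simp add: m_assoc)
      finally show ?thesis .
    qed
    then show ?thesis using a(1) b(1) by (simp add: group_center_def)
  qed
qed

theorem lemma7p1:
  fixes G :: "('a, 'b) monoid_scheme" and p m :: nat
  assumes "Factorial_Ring.prime p" and "group G" and "finite (carrier G)"
    and "order G = p ^ m"
    and "order (G Mod (group_center G)) = p ^ 2"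
  shows "conj_orbit_series G =
    fps_const (1 / real p ^ m) *
      (fps_const (real p ^ (m - 2)) * inverse (1 - fps_const (real p ^ m) * fps_X)
       + fps_const (real p ^ m - real p ^ (m - 2)) * inverse (1 - fps_const (real p ^ (m - 1)) * fps_X))"
proof -
  interpret group G by fact
  note pr = assms(1) and fin = assms(3)
  have p1: "p > 1" using pr prime_gt_1_nat by blast
  let ?Z = "group_center G"
  let ?C = "\<lambda>g. {x \<in> carrier G. x \<otimes>\<^bsub>G\<^esub> g = g \<otimes>\<^bsub>G\<^esub> x}"
  have Zsub: "subgroup ?Z G" by (rule center_subgroup)
  have "card (rcosets\<^bsub>G\<^esub> ?Z) * card ?Z = p ^ m" using lagrange[OF Zsub] assms(4) by simp
  moreover have "card (rcosets\<^bsub>G\<^esub> ?Z) = p ^ 2" using assms(5) by (simp add: order_def FactGroup_def)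
  ultimately have cZ0: "p ^ 2 * card ?Z = p ^ m" by simp
  have Zs: "?Z \<subseteq> carrier G" by (auto simp: group_center_def)
  have finZ: "finite ?Z" by (rule finite_subset[OF Zs fin])
  have "\<one>\<^bsub>G\<^esub> \<in> ?Z" by (rule subgroup.one_closed[OF Zsub])
  then have "card ?Z > 0" using finZ card_gt_0_iff by blast
  then have "p ^ 2 * 1 \<le> p ^ 2 * card ?Z" by (intro mult_le_mono2) simp
  then have "p ^ 2 \<le> p ^ m" using cZ0 by simp
  then have m2: "m \<ge> 2" using p1 by (simp add: power_increasing_iff)
  have cZ: "card ?Z = p ^ (m - 2)"
  proof -
    have "p ^ m = p ^ 2 * p ^ (m - 2)" using m2 by (metis le_add_diff_inverse power_add)
    then show ?thesis using cZ0 p1 by simp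
  qed
  have CZ: "?C g = carrier G" if "g \<in> ?Z" for g
    using that by (auto simp: group_center_def)
  have CnZ: "card (?C g) = p ^ (m - 1)" if g: "g \<in> carrier G" "g \<notin> ?Z" for g
  proof -
    have sub: "subgroup (?C g) G" using centralizer_subgroup g by blast
    have e: "card (rcosets\<^bsub>G\<^esub> (?C g)) * card (?C g) = p ^ m" using lagrange[OF sub] assms(4) by simp
    have "card (?C g) dvd p ^ m" unfolding e[symmetric] by (rule dvd_triv_right)
    then obtain k where k: "k \<le> m" "card (?C g) = p ^ k" using divides_primepow_nat[OF pr] by blast
    have "?Z \<subseteq> ?C g" using g(1) by (auto simp: group_center_def)
    moreover have "g \<in> ?C g" using g(1) by simp
    ultimately have "?Z \<subset> ?C g" using g(2) by blast
    moreover have "finite (?C g)" using fin by simp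
    ultimately have "card ?Z < card (?C g)" by (rule psubset_card_mono[rotated])
    then have "p ^ (m - 2) < p ^ k" using cZ k by simp
    then have k1: "k > m - 2" using p1 by (simp add: power_strict_increasing_iff)
    have "\<not> (\<forall>h\<in>carrier G. g \<otimes>\<^bsub>G\<^esub> h = h \<otimes>\<^bsub>G\<^esub> g)" using g unfolding group_center_def by blast
    then obtain h where h: "h \<in> carrier G" "g \<otimes>\<^bsub>G\<^esub> h \<noteq> h \<otimes>\<^bsub>G\<^esub> g" by blast
    then have "h \<notin> ?C g" by simp
    then have "?C g \<subset> carrier G" using h(1) by blast
    then have "card (?C g) < card (carrier G)" by (rule psubset_card_mono[OF fin])
    then have "card (?C g) < p ^ m" using assms(4) by (simp add: order_def)
    then have "k < m" using k p1 by (simp add: power_strict_increasing_iff)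
    then have "k = m - 1" using k1 by linarith
    then show ?thesis using k by simp
  qed
  have cnt: "conj_orbit_count G n * p ^ m = p ^ (m - 2) * (p ^ m) ^ n + (p ^ m - p ^ (m - 2)) * (p ^ (m - 1)) ^ n" for n
  proof -
    have "conj_orbit_count G n * p ^ m = (\<Sum>g\<in>carrier G. card (?C g) ^ n)"
      using count_burnside[OF fin] assms(4) by simp
    also have "\<dots> = (\<Sum>g\<in>?Z. card (?C g) ^ n) + (\<Sum>g\<in>carrier G - ?Z. card (?C g) ^ n)"
      using sum.subset_diff[OF Zs fin, of "\<lambda>g. card (?C g) ^ n"] by (simp add: add.commute)
    also have "\<dots> = (\<Sum>g\<in>?Z. (p ^ m) ^ n) + (\<Sum>g\<in>carrier G - ?Z. (p ^ (m - 1)) ^ n)"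
      using CZ CnZ assms(4) by (simp add: order_def)
    also have "\<dots> = p ^ (m - 2) * (p ^ m) ^ n + (p ^ m - p ^ (m - 2)) * (p ^ (m - 1)) ^ n"
      using cZ Zs fin assms(4) by (simp add: card_Diff_subset finite_subset order_def)
    finally show ?thesis .
  qed
  have le: "p ^ (m - 2) \<le> p ^ m" using p1 by (simp add: power_increasing)
  show ?thesis
  proof (rule fps_ext)
    fix n
    have "real (conj_orbit_count G n) * real p ^ m =
       real p ^ (m - 2) * (real p ^ m) ^ n + (real p ^ m - real p ^ (m - 2)) * (real p ^ (m - 1)) ^ n"
      using arg_cong[OF cnt[of n], of real] le by (simp add: of_nat_diff)
    then have "real (conj_orbit_count G n) =
       1 / real p ^ m * (real p ^ (m - 2) * (real p ^ m) ^ n + (real p ^ m - real p ^ (m - 2)) * (real p ^ (m - 1)) ^ n)"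
      using p1 by (simp add: field_simps)
    then show "fps_nth (conj_orbit_series G) n = fps_nth (fps_const (1 / real p ^ m) *
      (fps_const (real p ^ (m - 2)) * inverse (1 - fps_const (real p ^ m) * fps_X)
       + fps_const (real p ^ m - real p ^ (m - 2)) * inverse (1 - fps_const (real p ^ (m - 1)) * fps_X))) n"
      by (simp add: fps_geom conj_orbit_series_def)
  qed
qed

end
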